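(* Let $n\ge1$ and let $d$ be an $n$-dimension vector, and let $k_{n,d}(z)\in\mathbb{Z}[z]$ be the polynomial with $k_{n,d}(q)=k(\mathrm{P}_{n,d}(q),\mathrm{GL}_n(q))$ for all prime powers $q$. Then $z-1$ divides $k_{n,d}(z)$ in $\mathbb{Z}[z]$.
   Context: An $n$-dimension vector is a tuple $d=(d_1,\dots,d_t)$ of positive integers with $d_i<d_{i+1}$ and $d_t=n$; $\mathrm{P}_{n,d}(q)$ is the stabilizer in $\mathrm{GL}_n(q)$ of the standard flag $\{0\}\subset\mathbb{F}_q^{d_1}\subset\cdots\subset\mathbb{F}_q^{d_t}=\mathbb{F}_q^n$. $k(P,G)$ denotes the number of orbits of $P$ acting on $G$ by conjugation. *)

theory Defs
  imports "HOL-Algebra.Ring" "HOL-Computational_Algebra.Polynomial" "HOL-Computational_Algebra.Primes"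
begin

definition vec_space :: "('a, 'b) ring_scheme \<Rightarrow> nat \<Rightarrow> (nat \<Rightarrow> 'a) set" where
  "vec_space F n = {v. (\<forall>i<n. v i \<in> carrier F) \<and> (\<forall>i\<ge>n. v i = undefined)}"

definition mat_space :: "('a, 'b) ring_scheme \<Rightarrow> nat \<Rightarrow> (nat \<Rightarrow> nat \<Rightarrow> 'a) set" where
  "mat_space F n = {M. (\<forall>i<n. \<forall>j<n. M i j \<in> carrier F)
                      \<and> (\<forall>i j. \<not> (i < n \<and> j < n) \<longrightarrow> M i j = undefined)}"

definition mat_mult :: "('a, 'b) ring_scheme \<Rightarrow> nat \<Rightarrow> (nat \<Rightarrow> nat \<Rightarrow> 'a) \<Rightarrow> (nat \<Rightarrow> nat \<Rightarrow> 'a) \<Rightarrow> (nat \<Rightarrow> nat \<Rightarrow> 'a)" where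
  "mat_mult F n A B = (\<lambda>i j. if i < n \<and> j < n
       then finsum F (\<lambda>k. A i k \<otimes>\<^bsub>F\<^esub> B k j) {..<n} else undefined)"

definition mat_vec :: "('a, 'b) ring_scheme \<Rightarrow> nat \<Rightarrow> (nat \<Rightarrow> nat \<Rightarrow> 'a) \<Rightarrow> (nat \<Rightarrow> 'a) \<Rightarrow> (nat \<Rightarrow> 'a)" where
  "mat_vec F n A v = (\<lambda>i. if i < n then finsum F (\<lambda>k. A i k \<otimes>\<^bsub>F\<^esub> v k) {..<n} else undefined)"

definition mat_one :: "('a, 'b) ring_scheme \<Rightarrow> nat \<Rightarrow> (nat \<Rightarrow> nat \<Rightarrow> 'a)" where
  "mat_one F n = (\<lambda>i j. if i < n \<and> j < n then (if i = j then \<one>\<^bsub>F\<^esub> else \<zero>\<^bsub>F\<^esub>) else undefined)"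

definition GLn :: "('a, 'b) ring_scheme \<Rightarrow> nat \<Rightarrow> (nat \<Rightarrow> nat \<Rightarrow> 'a) set" where
  "GLn F n = {A \<in> mat_space F n. \<exists>B \<in> mat_space F n.
                 mat_mult F n A B = mat_one F n \<and> mat_mult F n B A = mat_one F n}"

definition mat_inv :: "('a, 'b) ring_scheme \<Rightarrow> nat \<Rightarrow> (nat \<Rightarrow> nat \<Rightarrow> 'a) \<Rightarrow> (nat \<Rightarrow> nat \<Rightarrow> 'a)" where
  "mat_inv F n A = (SOME B. B \<in> mat_space F n \<and>
                 mat_mult F n A B = mat_one F n \<and> mat_mult F n B A = mat_one F n)"

definition std_sub :: "('a, 'b) ring_scheme \<Rightarrow> nat \<Rightarrow> nat \<Rightarrow> (nat \<Rightarrow> 'a) set" where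
  "std_sub F n m = {v \<in> vec_space F n. \<forall>i. m \<le> i \<and> i < n \<longrightarrow> v i = \<zero>\<^bsub>F\<^esub>}"

definition dim_vector :: "nat \<Rightarrow> nat list \<Rightarrow> bool" where
  "dim_vector n d \<longleftrightarrow> d \<noteq> [] \<and> (\<forall>x\<in>set d. 0 < x) \<and> sorted_wrt (<) d \<and> last d = n"

definition parabolic :: "('a, 'b) ring_scheme \<Rightarrow> nat \<Rightarrow> nat list \<Rightarrow> (nat \<Rightarrow> nat \<Rightarrow> 'a) set" where
  "parabolic F n d = {g \<in> GLn F n. \<forall>m\<in>set d. mat_vec F n g ` std_sub F n m = std_sub F n m}"

definition num_conj_orbits :: "('a, 'b) ring_scheme \<Rightarrow> nat \<Rightarrow> (nat \<Rightarrow> nat \<Rightarrow> 'a) set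
      \<Rightarrow> (nat \<Rightarrow> nat \<Rightarrow> 'a) set \<Rightarrow> nat" where
  "num_conj_orbits F n P G =
     card ((\<lambda>g. {mat_mult F n (mat_mult F n p g) (mat_inv F n p) | p. p \<in> P}) ` G)"

end

theory Submission
  imports Defs "HOL-Number_Theory.Number_Theory" "HOL-Algebra.QuotRing" "Jordan_Normal_Form.Determinant"
begin


definition Fp :: "nat \<Rightarrow> nat ring" where
  "Fp p = \<lparr>carrier = {..<p}, monoid.mult = (\<lambda>a b. a * b mod p), one = 1,
           zero = 0, add = (\<lambda>a b. (a + b) mod p)\<rparr>"

lemma Fp_field:
  assumes "prime p" shows "field (Fp p)"
proof -
  define R where "R = residue_ring (int p)"
  interpret residues_prime p R by unfold_locales (simp_all add: assms R_def)
  have p1: "p > 1" using assms prime_gt_1_nat by blast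
  have h: "nat \<in> ring_iso R (Fp p)"
    unfolding ring_iso_def
  proof safe
    show "nat \<in> Ring.ring_hom R (Fp p)"
    proof (rule ring_hom_memI)
      fix x assume "x \<in> carrier R"
      then show "nat x \<in> carrier (Fp p)" by (auto simp: R_def residue_ring_def Fp_def)
    next
      fix x y assume "x \<in> carrier R" "y \<in> carrier R"
      then have x: "0 \<le> x" and y: "0 \<le> y" by (auto simp: R_def residue_ring_def)
      show "nat (x \<otimes>\<^bsub>R\<^esub> y) = nat x \<otimes>\<^bsub>Fp p\<^esub> nat y"
        using x y by (simp add: R_def residue_ring_def Fp_def nat_mod_distrib nat_mult_distrib)
      show "nat (x \<oplus>\<^bsub>R\<^esub> y) = nat x \<oplus>\<^bsub>Fp p\<^esub> nat y"
        using x y by (simp add: R_def residue_ring_def Fp_def nat_mod_distrib nat_add_distrib)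
    next
      show "nat \<one>\<^bsub>R\<^esub> = \<one>\<^bsub>Fp p\<^esub>" by (simp add: R_def residue_ring_def Fp_def)
    qed
    show "bij_betw nat (carrier R) (carrier (Fp p))"
      unfolding bij_betw_def
    proof
      show "inj_on nat (carrier R)" by (rule inj_onI) (auto simp: R_def residue_ring_def)
      show "nat ` carrier R = carrier (Fp p)"
      proof (intro equalityI subsetI)
        fix x assume "x \<in> nat ` carrier R" then show "x \<in> carrier (Fp p)"
          by (auto simp: R_def residue_ring_def Fp_def)
      next
        fix x assume "x \<in> carrier (Fp p)"
        then have "int x \<in> carrier R" "x = nat (int x)" by (auto simp: R_def residue_ring_def Fp_def)
        then show "x \<in> nat ` carrier R" by blast
      qed
    qed
  qed
  have "field ((Fp p)\<lparr>zero := nat \<zero>\<^bsub>R\<^esub>\<rparr>)" by (rule ring_iso_imp_img_field[OF h])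
  moreover have "(Fp p)\<lparr>zero := nat \<zero>\<^bsub>R\<^esub>\<rparr> = Fp p"
    by (simp add: R_def residue_ring_def Fp_def)
  ultimately show ?thesis by simp
qed


lemma finsum_Fp:
  assumes "prime p" "finite A" "f \<in> A \<rightarrow> {..<p}"
  shows "finsum (Fp p) f A = (\<Sum>a\<in>A. f a) mod p"
  using assms(2,3)
proof (induction A rule: finite_induct)
  case empty
  interpret field "Fp p" using Fp_field[OF assms(1)] .
  have "finsum (Fp p) f {} = \<zero>\<^bsub>Fp p\<^esub>" by simp
  then show ?case by (simp add: Fp_def)
next
  case (insert a A)
  interpret field "Fp p" using Fp_field[OF assms(1)] .
  have c: "carrier (Fp p) = {..<p}" by (simp add: Fp_def)
  have "finsum (Fp p) f (insert a A) = f a \<oplus>\<^bsub>Fp p\<^esub> finsum (Fp p) f A"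
    using insert by (intro finsum_insert) (auto simp: c)
  also have "\<dots> = (f a + (\<Sum>a\<in>A. f a) mod p) mod p" using insert by (simp add: Fp_def)
  also have "\<dots> = (\<Sum>a\<in>insert a A. f a) mod p" using insert by (simp add: mod_add_right_eq)
  finally show ?case .
qed

definition mm :: "nat \<Rightarrow> nat \<Rightarrow> (nat \<Rightarrow> nat \<Rightarrow> nat) \<Rightarrow> (nat \<Rightarrow> nat \<Rightarrow> nat) \<Rightarrow> (nat \<Rightarrow> nat \<Rightarrow> nat)" where
  "mm p n A B = (\<lambda>i j. if i < n \<and> j < n then (\<Sum>k<n. A i k * B k j) mod p else undefined)"

definition idm :: "nat \<Rightarrow> (nat \<Rightarrow> nat \<Rightarrow> nat)" where
  "idm n = (\<lambda>i j. if i < n \<and> j < n then (if i = j then 1 else 0) else undefined)"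

definition sc :: "nat \<Rightarrow> nat \<Rightarrow> nat \<Rightarrow> (nat \<Rightarrow> nat \<Rightarrow> nat) \<Rightarrow> (nat \<Rightarrow> nat \<Rightarrow> nat)" where
  "sc p n a A = (\<lambda>i j. if i < n \<and> j < n then a * A i j mod p else undefined)"

definition MS :: "nat \<Rightarrow> nat \<Rightarrow> (nat \<Rightarrow> nat \<Rightarrow> nat) set" where
  "MS p n = {M. (\<forall>i<n. \<forall>j<n. M i j < p) \<and> (\<forall>i j. \<not> (i < n \<and> j < n) \<longrightarrow> M i j = undefined)}"

lemma mat_mult_Fp:
  assumes "prime p" shows "mat_mult (Fp p) n A B = mm p n A B"
proof -
  have p0: "p > 0" using assms prime_gt_0_nat by blast
  have *: "finsum (Fp p) (\<lambda>k. A i k \<otimes>\<^bsub>Fp p\<^esub> B k j) {..<n} = (\<Sum>k<n. A i k * B k j) mod p" for i j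
    using finsum_Fp[OF assms, of "{..<n}" "\<lambda>k. A i k \<otimes>\<^bsub>Fp p\<^esub> B k j"] p0
    by (simp add: Fp_def mod_sum_eq)
  show ?thesis unfolding mat_mult_def mm_def by (intro ext) (simp only: *)
qed

lemma mat_one_Fp: "mat_one (Fp p) n = idm n"
proof -
  have a: "\<one>\<^bsub>Fp p\<^esub> = 1" "\<zero>\<^bsub>Fp p\<^esub> = 0" by (simp_all add: Fp_def)
  show ?thesis unfolding mat_one_def idm_def a ..
qed

lemma mat_space_Fp: "mat_space (Fp p) n = MS p n"
  unfolding mat_space_def MS_def by (simp add: Fp_def)

lemma mat_vec_Fp:
  assumes "prime p" shows "mat_vec (Fp p) n A v = (\<lambda>i. if i < n then (\<Sum>k<n. A i k * v k) mod p else undefined)"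
proof -
  have p0: "p > 0" using assms prime_gt_0_nat by blast
  have *: "finsum (Fp p) (\<lambda>k. A i k \<otimes>\<^bsub>Fp p\<^esub> v k) {..<n} = (\<Sum>k<n. A i k * v k) mod p" for i
    using finsum_Fp[OF assms, of "{..<n}" "\<lambda>k. A i k \<otimes>\<^bsub>Fp p\<^esub> v k"] p0
    by (simp add: Fp_def mod_sum_eq)
  show ?thesis unfolding mat_vec_def by (intro ext) (simp only: *)
qed

lemma GLn_Fp:
  assumes "prime p"
  shows "GLn (Fp p) n = {A \<in> MS p n. \<exists>B \<in> MS p n. mm p n A B = idm n \<and> mm p n B A = idm n}"
  unfolding GLn_def mat_space_Fp mat_mult_Fp[OF assms] mat_one_Fp ..

lemma mat_inv_Fp:
  assumes "prime p" "A \<in> GLn (Fp p) n"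
  shows "mat_inv (Fp p) n A \<in> MS p n" "mm p n A (mat_inv (Fp p) n A) = idm n"
        "mm p n (mat_inv (Fp p) n A) A = idm n"
proof -
  have "\<exists>B. B \<in> MS p n \<and> mm p n A B = idm n \<and> mm p n B A = idm n"
    using assms(2) unfolding GLn_Fp[OF assms(1)] by blast
  then have "mat_inv (Fp p) n A \<in> MS p n \<and> mm p n A (mat_inv (Fp p) n A) = idm n \<and>
       mm p n (mat_inv (Fp p) n A) A = idm n"
    unfolding mat_inv_def mat_space_Fp mat_mult_Fp[OF assms(1)] mat_one_Fp by (rule someI_ex)
  then show "mat_inv (Fp p) n A \<in> MS p n" "mm p n A (mat_inv (Fp p) n A) = idm n"
        "mm p n (mat_inv (Fp p) n A) A = idm n" by auto
qed

lemma mm_MS: "p > 0 \<Longrightarrow> mm p n A B \<in> MS p n"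
  by (auto simp: mm_def MS_def)

lemma sc_MS: "p > 0 \<Longrightarrow> sc p n a A \<in> MS p n"
  by (auto simp: sc_def MS_def)

lemma idm_MS: "p > 1 \<Longrightarrow> idm n \<in> MS p n"
  by (auto simp: idm_def MS_def)

lemma mm_idm_left: assumes "A \<in> MS p n" shows "mm p n (idm n) A = A"
proof -
  have "(\<Sum>k<n. (if i = k then 1 else 0) * A k j) = A i j" if "i < n" for i j
  proof -
    have "(\<Sum>k<n. (if i = k then 1 else 0) * A k j) = (\<Sum>k<n. if i = k then A k j else 0)"
      by (rule sum.cong) auto
    then show ?thesis using that by simp
  qed
  then show ?thesis using assms
    by (auto simp: mm_def idm_def MS_def fun_eq_iff cong: if_cong)
qed

lemma mm_idm_right: assumes "A \<in> MS p n" shows "mm p n A (idm n) = A"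
proof -
  have "(\<Sum>k<n. A i k * (if k = j then 1 else 0)) = A i j" if "j < n" for i j
  proof -
    have "(\<Sum>k<n. A i k * (if k = j then 1 else 0)) = (\<Sum>k<n. if k = j then A i k else 0)"
      by (rule sum.cong) auto
    then show ?thesis using that by simp
  qed
  then show ?thesis using assms
    by (auto simp: mm_def idm_def MS_def fun_eq_iff cong: if_cong)
qed

lemma mm_sc_left: "mm p n (sc p n a A) B = sc p n a (mm p n A B)"
proof -
  have "(\<Sum>k<n. (a * A i k mod p) * B k j) mod p = a * ((\<Sum>k<n. A i k * B k j) mod p) mod p" for i j
  proof -
    have "[(\<Sum>k<n. (a * A i k mod p) * B k j) = (\<Sum>k<n. a * (A i k * B k j))] (mod p)"
      by (intro cong_sum) (simp add: cong_def mod_mult_left_eq mult.assoc)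
    also have "(\<Sum>k<n. a * (A i k * B k j)) = a * (\<Sum>k<n. A i k * B k j)"
      by (simp add: sum_distrib_left)
    also have "[\<dots> = a * ((\<Sum>k<n. A i k * B k j) mod p)] (mod p)"
      by (simp add: cong_def mod_mult_right_eq)
    finally show ?thesis by (simp add: cong_def)
  qed
  then show ?thesis by (auto simp: mm_def sc_def fun_eq_iff cong: if_cong)
qed

lemma mm_sc_right: "mm p n A (sc p n a B) = sc p n a (mm p n A B)"
proof -
  have "(\<Sum>k<n. A i k * (a * B k j mod p)) mod p = a * ((\<Sum>k<n. A i k * B k j) mod p) mod p" for i j
  proof -
    have "[(\<Sum>k<n. A i k * (a * B k j mod p)) = (\<Sum>k<n. a * (A i k * B k j))] (mod p)"
      by (intro cong_sum) (simp add: cong_def mod_mult_right_eq mult.left_commute)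
    also have "(\<Sum>k<n. a * (A i k * B k j)) = a * (\<Sum>k<n. A i k * B k j)"
      by (simp add: sum_distrib_left)
    also have "[\<dots> = a * ((\<Sum>k<n. A i k * B k j) mod p)] (mod p)"
      by (simp add: cong_def mod_mult_right_eq)
    finally show ?thesis by (simp add: cong_def)
  qed
  then show ?thesis by (auto simp: mm_def sc_def fun_eq_iff cong: if_cong)
qed

lemma sc_sc: "sc p n a (sc p n b A) = sc p n (a * b) A"
  by (auto simp: sc_def fun_eq_iff mod_mult_right_eq mult.assoc)

lemma sc_cong1: assumes "A \<in> MS p n" "[a = 1] (mod p)" shows "sc p n a A = A"
proof -
  have "a * A i j mod p = A i j" if "i < n" "j < n" for i j
  proof -
    have "a * A i j mod p = (1 * A i j) mod p" using assms(2) by (metis cong_def mod_mult_left_eq)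
    then show ?thesis using assms(1) that by (simp add: MS_def)
  qed
  then show ?thesis using assms(1) by (auto simp: sc_def MS_def fun_eq_iff)
qed


definition toM :: "nat \<Rightarrow> (nat \<Rightarrow> nat \<Rightarrow> nat) \<Rightarrow> int mat" where
  "toM n A = mat n n (\<lambda>(i,j). int (A i j))"

definition dt :: "nat \<Rightarrow> (nat \<Rightarrow> nat \<Rightarrow> nat) \<Rightarrow> int" where
  "dt n A = det (toM n A)"

lemma toM_carrier[simp]: "toM n A \<in> carrier_mat n n"
  by (simp add: toM_def)

lemma det_cong_mod:
  assumes "A \<in> carrier_mat n n" "B \<in> carrier_mat n n"
    "\<And>i j. i < n \<Longrightarrow> j < n \<Longrightarrow> [A $$ (i,j) = B $$ (i,j)] (mod m)"
  shows "[det A = det B] (mod m)"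
  unfolding det_def'[OF assms(1)] det_def'[OF assms(2)]
proof (intro cong_sum cong_mult cong_refl cong_prod)
  fix q i assume q: "q \<in> {q. q permutes {0..<n}}" and i: "i \<in> {0..<n}"
  then have "q i \<in> {0..<n}" by (simp add: permutes_in_image)
  then show "[A $$ (i, q i) = B $$ (i, q i)] (mod m)" using i by (intro assms(3)) auto
qed

lemma dt_mm: "[dt n (mm p n A B) = dt n A * dt n B] (mod int p)"
proof -
  have "[det (toM n (mm p n A B)) = det (toM n A * toM n B)] (mod int p)"
  proof (rule det_cong_mod[of _ n])
    show "toM n A * toM n B \<in> carrier_mat n n" by (rule mult_carrier_mat[OF toM_carrier toM_carrier])
    fix i j assume ij: "i < n" "j < n"
    have "(toM n A * toM n B) $$ (i,j) = (\<Sum>k<n. int (A i k) * int (B k j))"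
      using ij by (simp add: toM_def scalar_prod_def lessThan_atLeast0)
    moreover have "toM n (mm p n A B) $$ (i,j) = (\<Sum>k<n. int (A i k) * int (B k j)) mod int p"
      using ij by (simp add: toM_def mm_def of_nat_mod)
    ultimately show "[toM n (mm p n A B) $$ (i,j) = (toM n A * toM n B) $$ (i,j)] (mod int p)"
      by (simp add: cong_def)
  qed simp
  then show ?thesis unfolding dt_def by (simp add: det_mult[of _ n])
qed

lemma dt_sc: "[dt n (sc p n a A) = int a ^ n * dt n A] (mod int p)"
proof -
  have "[det (toM n (sc p n a A)) = det (int a \<cdot>\<^sub>m toM n A)] (mod int p)"
  proof (rule det_cong_mod[of _ n])
    fix i j assume ij: "i < n" "j < n"
    show "[toM n (sc p n a A) $$ (i,j) = (int a \<cdot>\<^sub>m toM n A) $$ (i,j)] (mod int p)"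
      using ij by (simp add: toM_def sc_def of_nat_mod cong_def)
  qed simp_all
  then show ?thesis unfolding dt_def by (simp add: toM_def)
qed

lemma dt_idm: "dt n (idm n) = 1"
proof -
  have "toM n (idm n) = 1\<^sub>m n"
    by (rule eq_matI) (auto simp: toM_def idm_def)
  then show ?thesis by (simp add: dt_def)
qed



lemma unit_prod:
  fixes p a c n :: nat
  assumes "prime p" "a \<in> {1..<p}" "c \<in> {1..<p}"
  shows "(a ^ n * c) mod p \<in> {1..<p}"
proof -
  have p0: "p > 0" using assms(1) prime_gt_0_nat by blast
  have na: "\<not> p dvd a" using assms(2) by (intro nat_dvd_not_less) simp_all
  have nc: "\<not> p dvd c" using assms(3) by (intro nat_dvd_not_less) simp_all
  have "\<not> p dvd a ^ n" using na assms(1) prime_dvd_power by blast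
  then have "\<not> p dvd a ^ n * c"
    using nc assms(1) by (simp add: prime_dvd_mult_iff)
  then have "(a ^ n * c) mod p \<noteq> 0" by (simp add: dvd_eq_mod_eq_0)
  then show ?thesis using p0 by auto
qed

lemma unit_inv:
  fixes p a :: nat
  assumes "prime p" "a \<in> {1..<p}"
  shows "\<exists>b\<in>{1..<p}. [a * b = 1] (mod p)"
proof -
  have p1: "p > 1" using assms(1) prime_gt_1_nat by blast
  have na: "\<not> p dvd a" using assms(2) by (intro nat_dvd_not_less) simp_all
  have "coprime a p" using prime_imp_coprime[OF assms(1) na] by (simp add: coprime_commute)
  then obtain b where b: "[a * b = 1] (mod p)" using cong_solve_coprime_nat by auto
  then have b': "[a * (b mod p) = 1] (mod p)" unfolding cong_def by (simp add: mod_mult_right_eq)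
  have "b mod p \<noteq> 0"
  proof
    assume "b mod p = 0"
    then have "[0 = 1] (mod p)" using b' by (metis mult_0_right)
    then show False using p1 unfolding cong_def by simp
  qed
  then have "b mod p \<in> {1..<p}" using p1 by auto
  then show ?thesis using b' by blast
qed

lemma pow_mod_mult:
  fixes a b c n p :: nat
  shows "(b ^ n * ((a ^ n * c) mod p)) mod p = (((b * a) mod p) ^ n * c) mod p"
proof -
  have "(b ^ n * ((a ^ n * c) mod p)) mod p = (b ^ n * (a ^ n * c)) mod p"
    by (rule mod_mult_right_eq)
  also have "\<dots> = ((b * a) ^ n * c) mod p" by (simp add: power_mult_distrib mult.assoc)
  also have "\<dots> = (((b * a) mod p) ^ n * c) mod p"
    by (metis mod_mult_left_eq power_mod)
  finally show ?thesis .
qed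

lemma coset_dvd:
  fixes f :: "nat \<Rightarrow> nat" and p n :: nat
  assumes pp: "prime p" and inv: "\<And>a c. a \<in> {1..<p} \<Longrightarrow> c \<in> {1..<p} \<Longrightarrow> f ((a ^ n * c) mod p) = f c"
  shows "card ((\<lambda>a. a ^ n mod p) ` {1..<p}) dvd (\<Sum>c\<in>{1..<p}. f c)"
proof -
  define U where "U = {1..<p}"
  define S where "S = (\<lambda>a. a ^ n mod p) ` U"
  define cls where "cls c = (\<lambda>a. (a ^ n * c) mod p) ` U" for c
  have p1: "p > 1" using pp prime_gt_1_nat by blast
  have i: "cls c \<subseteq> U" if "c \<in> U" for c
    using unit_prod[OF pp _ that[unfolded U_def]] by (auto simp: cls_def U_def)
  have ii: "c \<in> cls c" if "c \<in> U" for c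
  proof -
    have "c = (1 ^ n * c) mod p" using that by (simp add: U_def)
    moreover have "(1::nat) \<in> U" using p1 by (simp add: U_def)
    ultimately show ?thesis unfolding cls_def by blast
  qed
  have iii: "cls x \<subseteq> cls c" if cU: "c \<in> U" and xc: "x \<in> cls c" for c x
  proof
    fix y assume "y \<in> cls x"
    then obtain b where b: "b \<in> U" "y = (b ^ n * x) mod p" by (auto simp: cls_def)
    obtain a where a: "a \<in> U" "x = (a ^ n * c) mod p" using xc by (auto simp: cls_def)
    have "y = (((b * a) mod p) ^ n * c) mod p" using a b pow_mod_mult by simp
    moreover have "(b * a) mod p \<in> U"
      using unit_prod[OF pp, of b a 1] a b by (simp add: U_def)
    ultimately show "y \<in> cls c" by (auto simp: cls_def)
  qed
  have iv: "c \<in> cls x" if cU: "c \<in> U" and xc: "x \<in> cls c" for c x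
  proof -
    obtain a where a: "a \<in> U" "x = (a ^ n * c) mod p" using xc by (auto simp: cls_def)
    obtain b where b: "b \<in> U" "[a * b = 1] (mod p)" using unit_inv[OF pp, of a] a by (auto simp: U_def)
    have "(b ^ n * x) mod p = (((b * a) mod p) ^ n * c) mod p" using a pow_mod_mult by simp
    also have "(b * a) mod p = 1" using b p1 by (simp add: cong_def mult.commute)
    also have "(1 ^ n * c) mod p = c" using cU by (simp add: U_def)
    finally have "c = (b ^ n * x) mod p" by simp
    then show ?thesis using b(1) unfolding cls_def by (rule image_eqI)
  qed
  have fib: "{x \<in> U. cls x = cls c} = cls c" if "c \<in> U" for c
  proof (intro equalityI subsetI)
    fix x assume "x \<in> {x \<in> U. cls x = cls c}"
    then show "x \<in> cls c" using ii by auto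
  next
    fix x assume x: "x \<in> cls c"
    then have "x \<in> U" using i that by auto
    moreover have "cls x = cls c" using iii[OF that x] iv[OF that x] iii[OF \<open>x \<in> U\<close>] by blast
    ultimately show "x \<in> {x \<in> U. cls x = cls c}" by simp
  qed
  have card_cls: "card (cls c) = card S" if "c \<in> U" for c
  proof -
    have eq: "cls c = (\<lambda>s. (s * c) mod p) ` S"
      unfolding cls_def S_def image_image by (rule image_cong) (simp_all add: mod_mult_left_eq)
    have "\<not> p dvd c" using that by (intro nat_dvd_not_less) (simp_all add: U_def)
    then have cop: "coprime c p"
      using prime_imp_coprime[OF pp] by (simp add: coprime_commute)
    have "inj_on (\<lambda>s. (s * c) mod p) S"
    proof (rule inj_onI)
      fix s t assume st: "s \<in> S" "t \<in> S" "(s * c) mod p = (t * c) mod p"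
      then have "[s = t] (mod p)" using cong_mult_rcancel_nat[OF cop] by (simp add: cong_def)
      moreover have "s < p" "t < p" using st p1 by (auto simp: S_def)
      ultimately show "s = t" by (simp add: cong_def)
    qed
    then show ?thesis using eq by (simp add: card_image)
  qed
  have const: "sum f (cls c) = card S * f c" if "c \<in> U" for c
  proof -
    have "sum f (cls c) = sum (\<lambda>_. f c) (cls c)"
    proof (rule sum.cong)
      fix x assume "x \<in> cls c"
      then obtain a where "a \<in> U" "x = (a ^ n * c) mod p" by (auto simp: cls_def)
      then show "f x = f c" using inv[of a c] that by (simp add: U_def)
    qed simp
    then show ?thesis using card_cls[OF that] by simp
  qed
  have "sum f U = (\<Sum>y\<in>cls ` U. sum f {x \<in> U. cls x = y})"
    by (rule sum.image_gen) (simp add: U_def)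
  also have "card S dvd \<dots>"
  proof (rule dvd_sum)
    fix y assume "y \<in> cls ` U"
    then obtain c where c: "c \<in> U" "y = cls c" by blast
    show "card S dvd sum f {x \<in> U. cls x = y}" using c fib const by simp
  qed
  finally show ?thesis by (simp add: U_def S_def)
qed

lemma card_pow_dvd:
  fixes p n :: nat
  assumes "prime p"
  shows "card ((\<lambda>a. a ^ n mod p) ` {1..<p}) dvd (p - 1)"
  using coset_dvd[OF assms, of "\<lambda>_. 1" n] by simp

lemma card_pow_ge:
  fixes p n :: nat
  assumes "prime p" "n > 0"
  shows "p - 1 \<le> n * card ((\<lambda>a. a ^ n mod p) ` {1..<p})"
proof -
  define S where "S = (\<lambda>a. a ^ n mod p) ` {1..<p}"
  have "{1..<p} \<subseteq> (\<Union>s\<in>S. {x\<in>{..<p}. [x ^ n = s] (mod p)})"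
    by (auto simp: S_def cong_def)
  moreover have "finite (\<Union>s\<in>S. {x\<in>{..<p}. [x ^ n = s] (mod p)})"
    by (rule finite_subset[of _ "{..<p}"]) auto
  ultimately have "card {1..<p} \<le> card (\<Union>s\<in>S. {x\<in>{..<p}. [x ^ n = s] (mod p)})"
    by (intro card_mono)
  also have "\<dots> \<le> (\<Sum>s\<in>S. card {x\<in>{..<p}. [x ^ n = s] (mod p)})"
    by (rule card_UN_le) (simp add: S_def)
  also have "\<dots> \<le> (\<Sum>s\<in>S. n)"
    by (intro sum_mono roots_mod_prime_bound assms)
  finally show ?thesis by (simp add: S_def mult.commute)
qed




lemma finite_MS: "finite (MS p n)"
proof -
  let ?f = "\<lambda>f i j. if i < n \<and> j < n then f (i, j) else undefined"
  have "MS p n \<subseteq> ?f ` (({..<n} \<times> {..<n}) \<rightarrow>\<^sub>E {..<p})"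
  proof
    fix M assume M: "M \<in> MS p n"
    have "M = ?f (restrict (\<lambda>(i,j). M i j) ({..<n} \<times> {..<n}))"
      using M by (auto simp: MS_def fun_eq_iff)
    moreover have "restrict (\<lambda>(i,j). M i j) ({..<n} \<times> {..<n}) \<in> ({..<n} \<times> {..<n}) \<rightarrow>\<^sub>E {..<p}"
      using M by (auto simp: MS_def)
    ultimately show "M \<in> ?f ` (({..<n} \<times> {..<n}) \<rightarrow>\<^sub>E {..<p})" by blast
  qed
  moreover have "finite (?f ` (({..<n} \<times> {..<n}) \<rightarrow>\<^sub>E {..<p}))"
    by (intro finite_imageI finite_PiE) auto
  ultimately show ?thesis by (rule finite_subset)
qed

context
  fixes p n :: nat and P :: "(nat \<Rightarrow> nat \<Rightarrow> nat) set"
  assumes pp: "prime p" and n0: "n > 0" and PG: "P \<subseteq> GLn (Fp p) n" and idP: "idm n \<in> P"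
begin

abbreviation "GG \<equiv> GLn (Fp p) n"

definition orb :: "(nat \<Rightarrow> nat \<Rightarrow> nat) \<Rightarrow> (nat \<Rightarrow> nat \<Rightarrow> nat) set" where
  "orb g = (\<lambda>q. mm p n (mm p n q g) (mat_inv (Fp p) n q)) ` P"

definition Dt :: "(nat \<Rightarrow> nat \<Rightarrow> nat) \<Rightarrow> nat" where
  "Dt g = nat (dt n g mod int p)"

definition Xc :: "nat \<Rightarrow> (nat \<Rightarrow> nat \<Rightarrow> nat) set set" where
  "Xc c = orb ` {g \<in> GG. Dt g = c}"

lemma p1: "p > 1" using pp prime_gt_1_nat by blast
lemma p0: "p > 0" using p1 by simp

lemma GG_char: "g \<in> GG \<longleftrightarrow> g \<in> MS p n \<and> (\<exists>B\<in>MS p n. mm p n g B = idm n \<and> mm p n B g = idm n)"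
  unfolding GLn_Fp[OF pp] by blast

lemma finite_GG: "finite GG"
  by (rule finite_subset[OF _ finite_MS[of p n]]) (auto simp: GG_char)

lemma dt_inv: assumes "mm p n g B = idm n" shows "[dt n g * dt n B = 1] (mod int p)"
  using dt_mm[of n p g B] assms dt_idm[of n] by (simp add: cong_sym)

lemma Dt_unit: assumes "g \<in> GG" shows "Dt g \<in> {1..<p}"
proof -
  obtain B where B: "mm p n g B = idm n" using assms GG_char by blast
  have c: "[dt n g * dt n B = 1] (mod int p)" using dt_inv[OF B] .
  have "dt n g mod int p \<noteq> 0"
  proof
    assume "dt n g mod int p = 0"
    then have "[dt n g * dt n B = 0] (mod int p)"
      by (simp add: cong_def mod_mult_left_eq[symmetric])
    then have "[1 = (0::int)] (mod int p)" using c by (meson cong_sym cong_trans)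
    then show False using p1 by (simp add: cong_def)
  qed
  moreover have "0 \<le> dt n g mod int p" "dt n g mod int p < int p" using p0 by simp_all
  ultimately show ?thesis unfolding Dt_def by auto
qed

lemma Dt_eq_iff: "Dt g = Dt h \<longleftrightarrow> [dt n g = dt n h] (mod int p)"
proof -
  have "0 \<le> dt n g mod int p" "0 \<le> dt n h mod int p" using p0 by simp_all
  then show ?thesis unfolding Dt_def cong_def by (simp add: eq_nat_nat_iff)
qed

lemma orb_Dt: assumes "g \<in> GG" "h \<in> orb g" shows "Dt h = Dt g"
proof -
  obtain q where q: "q \<in> P" "h = mm p n (mm p n q g) (mat_inv (Fp p) n q)"
    using assms(2) by (auto simp: orb_def)
  let ?qi = "mat_inv (Fp p) n q"
  have qG: "q \<in> GG" using q PG by blast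
  have 1: "[dt n h = dt n (mm p n q g) * dt n ?qi] (mod int p)" using q(2) dt_mm by simp
  have 2: "[dt n (mm p n q g) * dt n ?qi = (dt n q * dt n g) * dt n ?qi] (mod int p)"
    by (intro cong_mult dt_mm cong_refl)
  have 3: "[dt n q * dt n ?qi = 1] (mod int p)" using dt_inv mat_inv_Fp(2)[OF pp qG] by blast
  have e: "(dt n q * dt n g) * dt n ?qi = dt n g * (dt n q * dt n ?qi)" by (simp add: ac_simps)
  have "[dt n g * (dt n q * dt n ?qi) = dt n g * 1] (mod int p)"
    by (intro cong_mult cong_refl 3)
  then have 4: "[(dt n q * dt n g) * dt n ?qi = dt n g] (mod int p)" unfolding e by simp
  have "[dt n h = dt n g] (mod int p)" by (rule cong_trans[OF cong_trans[OF 1 2] 4])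
  then show ?thesis by (simp add: Dt_eq_iff)
qed

lemma mat_inv_idm: "mat_inv (Fp p) n (idm n) = idm n"
proof -
  have iG: "idm n \<in> GG" using idP PG by blast
  have "mat_inv (Fp p) n (idm n) \<in> MS p n" "mm p n (idm n) (mat_inv (Fp p) n (idm n)) = idm n"
    using mat_inv_Fp[OF pp iG] by auto
  then show ?thesis using mm_idm_left[of "mat_inv (Fp p) n (idm n)" p n] by simp
qed

lemma self_orb: assumes "g \<in> MS p n" shows "g \<in> orb g"
proof -
  have "mm p n (mm p n (idm n) g) (mat_inv (Fp p) n (idm n)) = g"
    using assms by (simp add: mat_inv_idm mm_idm_left mm_idm_right)
  then have e: "g = (\<lambda>q. mm p n (mm p n q g) (mat_inv (Fp p) n q)) (idm n)" by simp
  show ?thesis unfolding orb_def by (rule image_eqI[where f="\<lambda>q. mm p n (mm p n q g) (mat_inv (Fp p) n q)", OF e idP])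
qed

lemma orb_sc: "orb (sc p n a g) = sc p n a ` orb g"
  unfolding orb_def image_image by (simp add: mm_sc_left mm_sc_right)

lemma orb_MS: "orb g \<subseteq> MS p n"
  unfolding orb_def using mm_MS[OF p0] by blast

lemma sc_GG: assumes "g \<in> GG" "a \<in> {1..<p}" shows "sc p n a g \<in> GG"
proof -
  obtain B where B: "B \<in> MS p n" "mm p n g B = idm n" "mm p n B g = idm n" using assms GG_char by blast
  obtain b where b: "b \<in> {1..<p}" "[a * b = 1] (mod p)" using unit_inv[OF pp assms(2)] by blast
  have i: "idm n \<in> MS p n" using idm_MS[OF p1] .
  have b': "[b * a = 1] (mod p)" using b(2) by (simp add: mult.commute)
  have "mm p n (sc p n a g) (sc p n b B) = idm n"
    by (simp add: mm_sc_left mm_sc_right sc_sc B sc_cong1[OF i b(2)] sc_cong1[OF i b'])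
  moreover have "mm p n (sc p n b B) (sc p n a g) = idm n"
    by (simp add: mm_sc_left mm_sc_right sc_sc B sc_cong1[OF i b(2)] sc_cong1[OF i b'])
  ultimately show ?thesis using sc_MS[OF p0] assms(1) GG_char by blast
qed

lemma sc_inj: assumes "a \<in> {1..<p}" shows "inj_on (sc p n a) (MS p n)"
proof (rule inj_onI)
  fix A B assume A: "A \<in> MS p n" and B: "B \<in> MS p n" and e: "sc p n a A = sc p n a B"
  obtain b where b: "[b * a = 1] (mod p)" using unit_inv[OF pp assms] by (auto simp: mult.commute)
  have "sc p n b (sc p n a A) = sc p n b (sc p n a B)" using e by simp
  then show "A = B" by (simp add: sc_sc sc_cong1[OF A b] sc_cong1[OF B b])
qed

lemma Dt_sc: assumes "g \<in> GG" shows "Dt (sc p n a g) = (a ^ n * Dt g) mod p"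
proof -
  have e: "int (Dt g) = dt n g mod int p" using p0 by (simp add: Dt_def)
  have "int ((a ^ n * Dt g) mod p) = (int a ^ n * (dt n g mod int p)) mod int p"
    by (simp add: of_nat_mod e)
  also have "\<dots> = (int a ^ n * dt n g) mod int p" by (simp add: mod_mult_right_eq)
  also have "\<dots> = dt n (sc p n a g) mod int p" using dt_sc[of n p a g] by (simp add: cong_def)
  finally have e2: "int ((a ^ n * Dt g) mod p) = dt n (sc p n a g) mod int p" .
  show ?thesis unfolding Dt_def e2[symmetric] by simp
qed


lemma X_union: "orb ` GG = (\<Union>c\<in>{1..<p}. Xc c)"
  unfolding Xc_def using Dt_unit by blast

lemma Xc_disj: assumes "c \<noteq> c'" shows "Xc c \<inter> Xc c' = {}"
proof (rule ccontr)
  assume "Xc c \<inter> Xc c' \<noteq> {}"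
  then obtain g g' where g: "g \<in> GG" "Dt g = c" and g': "g' \<in> GG" "Dt g' = c'" and e: "orb g = orb g'"
    unfolding Xc_def by blast
  have "g' \<in> orb g" using self_orb[of g'] g'(1) e GG_char by blast
  then have "Dt g' = Dt g" using orb_Dt g(1) by blast
  then show False using assms g g' by simp
qed

lemma finite_Xc: "finite (Xc c)"
  unfolding Xc_def using finite_GG by simp

lemma card_X: "card (orb ` GG) = (\<Sum>c\<in>{1..<p}. card (Xc c))"
  unfolding X_union by (rule card_UN_disjoint) (auto simp: finite_Xc Xc_disj)

lemma Xc_shift: assumes a: "a \<in> {1..<p}" and c: "c \<in> {1..<p}"
  shows "card (Xc c) \<le> card (Xc ((a ^ n * c) mod p))"
proof (rule card_inj_on_le)
  have "\<Union> (Xc c) \<subseteq> MS p n" unfolding Xc_def using orb_MS by blast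
  then show "inj_on ((`) (sc p n a)) (Xc c)"
    by (intro inj_on_image inj_on_subset[OF sc_inj[OF a]])
  show "(`) (sc p n a) ` Xc c \<subseteq> Xc ((a ^ n * c) mod p)"
  proof
    fix Y assume "Y \<in> (`) (sc p n a) ` Xc c"
    then obtain g where g: "g \<in> GG" "Dt g = c" "Y = sc p n a ` orb g" unfolding Xc_def by blast
    then have "Y = orb (sc p n a g)" by (simp add: orb_sc)
    moreover have "sc p n a g \<in> GG" using sc_GG[OF g(1) a] .
    moreover have "Dt (sc p n a g) = (a ^ n * c) mod p" using Dt_sc[OF g(1)] g(2) by simp
    ultimately show "Y \<in> Xc ((a ^ n * c) mod p)" unfolding Xc_def by blast
  qed
  show "finite (Xc ((a ^ n * c) mod p))" by (rule finite_Xc)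
qed

lemma Xc_inv: assumes a: "a \<in> {1..<p}" and c: "c \<in> {1..<p}"
  shows "card (Xc ((a ^ n * c) mod p)) = card (Xc c)"
proof (rule antisym)
  obtain b where b: "b \<in> {1..<p}" "[a * b = 1] (mod p)" using unit_inv[OF pp a] by blast
  have c': "(a ^ n * c) mod p \<in> {1..<p}" using unit_prod[OF pp a c] .
  have "(b ^ n * ((a ^ n * c) mod p)) mod p = (((b * a) mod p) ^ n * c) mod p" by (rule pow_mod_mult)
  also have "(b * a) mod p = 1" using b(2) p1 by (simp add: cong_def mult.commute)
  also have "(1 ^ n * c) mod p = c" using c by simp
  finally have e: "(b ^ n * ((a ^ n * c) mod p)) mod p = c" .
  show "card (Xc ((a ^ n * c) mod p)) \<le> card (Xc c)"
    using Xc_shift[OF b(1) c'] unfolding e .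
  show "card (Xc c) \<le> card (Xc ((a ^ n * c) mod p))" by (rule Xc_shift[OF a c])
qed

lemma orbit_count_dvd: "card ((\<lambda>a. a ^ n mod p) ` {1..<p}) dvd card (orb ` GG)"
  unfolding card_X by (rule coset_dvd[OF pp, of "\<lambda>c. card (Xc c)"]) (rule Xc_inv)

end



lemma mat_vec_idm:
  assumes "prime p" "v \<in> vec_space (Fp p) n"
  shows "mat_vec (Fp p) n (idm n) v = v"
proof -
  have v: "\<And>i. i < n \<Longrightarrow> v i < p" "\<And>i. \<not> i < n \<Longrightarrow> v i = undefined"
    using assms(2) by (auto simp: vec_space_def Fp_def)
  have "(\<Sum>k<n. idm n i k * v k) = v i" if "i < n" for i
  proof -
    have "(\<Sum>k<n. idm n i k * v k) = (\<Sum>k<n. if i = k then v k else 0)"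
      by (rule sum.cong) (auto simp: idm_def that)
    then show ?thesis using that by simp
  qed
  then show ?thesis using v unfolding mat_vec_Fp[OF assms(1)] by (auto simp: fun_eq_iff)
qed

lemma idm_parabolic:
  assumes "prime p"
  shows "idm n \<in> parabolic (Fp p) n d"
proof -
  have p1: "p > 1" using assms prime_gt_1_nat by blast
  have "idm n \<in> GLn (Fp p) n"
    unfolding GLn_Fp[OF assms] using idm_MS[OF p1] mm_idm_left[OF idm_MS[OF p1]] by blast
  moreover have "mat_vec (Fp p) n (idm n) ` std_sub (Fp p) n m = std_sub (Fp p) n m" for m
  proof -
    have "mat_vec (Fp p) n (idm n) ` std_sub (Fp p) n m = id ` std_sub (Fp p) n m"
      by (rule image_cong) (auto simp: std_sub_def mat_vec_idm[OF assms])
    then show ?thesis by simp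
  qed
  ultimately show ?thesis unfolding parabolic_def by blast
qed

lemma parabolic_GL: "parabolic F n d \<subseteq> GLn F n"
  unfolding parabolic_def by blast

lemma num_orbits_dvd:
  assumes "prime p" "n > 0"
  shows "card ((\<lambda>a. a ^ n mod p) ` {1..<p}) dvd num_conj_orbits (Fp p) n (parabolic (Fp p) n d) (GLn (Fp p) n)"
proof -
  let ?P = "parabolic (Fp p) n d"
  have e: "(\<lambda>g. {mat_mult (Fp p) n (mat_mult (Fp p) n q g) (mat_inv (Fp p) n q) | q. q \<in> ?P})
      = orb p n ?P"
    by (intro ext) (simp only: mat_mult_Fp[OF assms(1)] Setcompr_eq_image
        orb_def[OF assms(1) assms(2) parabolic_GL idm_parabolic[OF assms(1)]])
  show ?thesis unfolding num_conj_orbits_def e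
    by (rule orbit_count_dvd[OF assms parabolic_GL idm_parabolic[OF assms(1)]])
qed

lemma poly_diff_dvd_int:
  fixes k :: "int poly"
  shows "(x - 1) dvd (poly k x - poly k 1)"
proof -
  have "poly (k - [:poly k 1:]) 1 = 0" by simp
  then obtain r where r: "k - [:poly k 1:] = [:-1, 1:] * r" using poly_eq_0_iff_dvd by (metis dvdE)
  have "poly k x - poly k 1 = poly (k - [:poly k 1:]) x" by simp
  also have "\<dots> = (x - 1) * poly r x" unfolding r by (simp add: algebra_simps)
  finally show ?thesis by simp
qed

theorem mainTheorem5:
  fixes n :: nat and d :: "nat list" and k :: "int poly"
  assumes "n \<ge> 1"
    and "dim_vector n d"
    and "\<forall>q::nat. (\<exists>p e. prime p \<and> e \<ge> 1 \<and> q = p ^ e) \<longrightarrow>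
           (\<forall>F :: nat ring. field F \<and> finite (carrier F) \<and> card (carrier F) = q \<longrightarrow>
              poly k (int q) = int (num_conj_orbits F n (parabolic F n d) (GLn F n)))"
  shows "[:-1, 1:] dvd k"
proof -
  have n0: "n > 0" using assms(1) by simp
  have key: "poly k 1 = 0"
  proof (rule ccontr)
    assume nz: "poly k 1 \<noteq> 0"
    define c where "c = nat \<bar>poly k 1\<bar>"
    obtain p where p: "prime p" "p > n * c + 1" using bigger_prime by blast
    define s where "s = card ((\<lambda>a. a ^ n mod p) ` {1..<p})"
    have p1: "p > 1" using p(1) prime_gt_1_nat by blast
    have hq: "poly k (int p) = int (num_conj_orbits (Fp p) n (parabolic (Fp p) n d) (GLn (Fp p) n))"
    proof -
      have "\<exists>p' e. prime p' \<and> e \<ge> 1 \<and> p = p' ^ e" using p(1) by (intro exI[of _ p] exI[of _ 1]) simp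
      moreover have "field (Fp p) \<and> finite (carrier (Fp p)) \<and> card (carrier (Fp p)) = p"
        using Fp_field[OF p(1)] by (simp add: Fp_def)
      ultimately show ?thesis using assms(3) by blast
    qed
    have d1: "int s dvd poly k (int p)"
      unfolding hq s_def using num_orbits_dvd[OF p(1) n0, of d] by (simp only: int_dvd_int_iff)
    have d2: "int s dvd (int p - 1)"
      using card_pow_dvd[OF p(1), of n] p1 unfolding s_def by (metis int_dvd_int_iff of_nat_1 of_nat_diff less_imp_le)
    have "int s dvd (poly k (int p) - poly k 1)"
      using poly_diff_dvd_int[of "int p" k] d2 dvd_trans by blast
    then have d3: "int s dvd poly k (int p) - (poly k (int p) - poly k 1)" using d1 by (rule dvd_diff[rotated])
    then have d3: "int s dvd poly k 1" by simp
    have "s > 0"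
    proof -
      have "1 \<in> (\<lambda>a. a ^ n mod p) ` {1..<p}" using p1 by (intro image_eqI[of _ _ 1]) auto
      then show ?thesis unfolding s_def by (auto simp: card_gt_0_iff)
    qed
    have "\<bar>int s\<bar> \<le> \<bar>poly k 1\<bar>" using dvd_imp_le_int[OF nz d3] .
    then have "int s \<le> \<bar>poly k 1\<bar>" by simp
    then have "s \<le> c" unfolding c_def by linarith
    moreover have "p - 1 \<le> n * s" using card_pow_ge[OF p(1) n0] unfolding s_def .
    ultimately have "p - 1 \<le> n * c" by (meson le_trans mult_le_mono2)
    then show False using p(2) by linarith
  qed
  then show ?thesis using poly_eq_0_iff_dvd[of k 1] by simp
qed


end
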